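(* Let $H$ be a connected graph on vertex set $\{1,\dots,r\}$ and, for each $i\in\{1,\dots,r\}$, let $G_i$ be a $d_i$-regular graph of order $n_i$ with adjacency eigenvalues $d_i=\lambda_1(A(G_i)),\lambda_2(A(G_i)),\dots,\lambda_{n_i}(A(G_i))$. Let $G=\bigvee_H\{G_i:1\le i\le r\}$ and $N_i=\sum_{j\in N_H(i)}n_j$. For $s\in\mathbb{R}$, let $M_i(s)=(s^2(d_i+N_i-1)+1)I_{n_i}-sA(G_i)$, so that $\sigma(M_i(s))=\{s^2(d_i+N_i-1)-s\lambda_k(A(G_i))+1\}_{k=1}^{n_i}$, and $\lambda_1(M_i(s))=s^2(d_i+N_i-1)-sd_i+1$. Let $F_r(s)$ be the $r\times r$ symmetric matrix with diagonal entries $(F_r(s))_{ii}=\lambda_1(M_i(s))$ and off-diagonal entries $(F_r(s))_{ij}=\delta_{ij}\sqrt{n_in_j}$, where $\delta_{ij}=-s$ if $ij\in E(H)$ and $\delta_{ij}=0$ otherwise. Then, as multisets, $$\sigma(M_G(s))=\bigcup_{i=1}^r\big(\sigma(M_i(s))-\{\lambda_1(M_i(s))\}\big)\cup\sigma(F_r(s)),$$ where $\sigma(M_i(s))-\{\lambda_1(M_i(s))\}$ denotes the multiset $\{s^2(d_i+N_i-1)-s\lambda_k(A(G_i))+1\}_{k=2}^{n_i}$.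
   Context: For a simple undirected graph $G$ on $n$ vertices with adjacency matrix $A$, diagonal degree matrix $D$ and identity $I$, and real $s$, the deformed Laplacian matrix is $M_G(s)=I-sA+s^2(D-I)$; $\sigma(\cdot)$ is the multiset of eigenvalues. $H$-join: given a graph $H$ on vertex set $\{1,\dots,r\}$ and pairwise vertex-disjoint graphs $G_1,\dots,G_r$, the graph $G=\bigvee_H\{G_i:1\le i\le r\}$ has vertex set $\bigcup_i V(G_i)$ and edge set $\bigcup_iE(G_i)\cup\bigcup_{ij\in E(H)}\{uv:u\in V(G_i),v\in V(G_j)\}$. $N_H(i)$ is the set of neighbours of $i$ in $H$. *)

theory Defs
  imports "Jordan_Normal_Form.Char_Poly" "HOL-Library.Multiset"
begin

text \<open>To use the library's matrices we
  enumerate V by an (arbitrary) bijection from {0..<card V}; the spectrum is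
  independent of the chosen enumeration.\<close>

definition vertex_enum :: "'v set \<Rightarrow> nat \<Rightarrow> 'v" where
  "vertex_enum V = (SOME f. bij_betw f {..<card V} V)"

definition mat_on :: "'v set \<Rightarrow> ('v \<Rightarrow> 'v \<Rightarrow> real) \<Rightarrow> real mat" where
  "mat_on V M = mat (card V) (card V) (\<lambda>(a, b). M (vertex_enum V a) (vertex_enum V b))"

text \<open>All matrices
  used below are real symmetric, so this is the full spectrum.\<close>

definition spec_on :: "'v set \<Rightarrow> ('v \<Rightarrow> 'v \<Rightarrow> real) \<Rightarrow> real multiset" where
  "spec_on V M = proots (char_poly (mat_on V M))"

definition simple_graph :: "'v set \<Rightarrow> ('v \<Rightarrow> 'v \<Rightarrow> bool) \<Rightarrow> bool" where
  "simple_graph V E \<longleftrightarrow> finite V \<and> (\<forall>u\<in>V. \<forall>v\<in>V. E u v \<longleftrightarrow> E v u) \<and> (\<forall>v\<in>V. \<not> E v v)"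

definition adj_mat :: "'v set \<Rightarrow> ('v \<Rightarrow> 'v \<Rightarrow> bool) \<Rightarrow> 'v \<Rightarrow> 'v \<Rightarrow> real" where
  "adj_mat V E u v = (if E u v then 1 else 0)"

definition degree :: "'v set \<Rightarrow> ('v \<Rightarrow> 'v \<Rightarrow> bool) \<Rightarrow> 'v \<Rightarrow> nat" where
  "degree V E v = card {u \<in> V. E v u}"

definition regular :: "'v set \<Rightarrow> ('v \<Rightarrow> 'v \<Rightarrow> bool) \<Rightarrow> nat \<Rightarrow> bool" where
  "regular V E d \<longleftrightarrow> (\<forall>v\<in>V. degree V E v = d)"

definition connected_graph :: "'v set \<Rightarrow> ('v \<Rightarrow> 'v \<Rightarrow> bool) \<Rightarrow> bool" where
  "connected_graph V E \<longleftrightarrow> V \<noteq> {} \<and>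
     (\<forall>u\<in>V. \<forall>v\<in>V. (\<lambda>a b. a \<in> V \<and> b \<in> V \<and> E a b)\<^sup>*\<^sup>* u v)"

definition deformed_laplacian :: "'v set \<Rightarrow> ('v \<Rightarrow> 'v \<Rightarrow> bool) \<Rightarrow> real \<Rightarrow> 'v \<Rightarrow> 'v \<Rightarrow> real" where
  "deformed_laplacian V E s u v =
     (if u = v then 1 else 0) - s * adj_mat V E u v
     + s\<^sup>2 * (if u = v then real (degree V E u) - 1 else 0)"

text \<open>H-join: H has vertex set {1..r} and edges EH; graph i has vertex set VG i
  and edges EG i (vertex sets pairwise disjoint).\<close>

definition join_vertices :: "nat \<Rightarrow> (nat \<Rightarrow> 'v set) \<Rightarrow> 'v set" where
  "join_vertices r VG = (\<Union>i\<in>{1..r}. VG i)"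

definition join_edges :: "nat \<Rightarrow> (nat \<Rightarrow> nat \<Rightarrow> bool) \<Rightarrow> (nat \<Rightarrow> 'v set)
     \<Rightarrow> (nat \<Rightarrow> 'v \<Rightarrow> 'v \<Rightarrow> bool) \<Rightarrow> 'v \<Rightarrow> 'v \<Rightarrow> bool" where
  "join_edges r EH VG EG u v \<longleftrightarrow>
     (\<exists>i\<in>{1..r}. u \<in> VG i \<and> v \<in> VG i \<and> EG i u v) \<or>
     (\<exists>i\<in>{1..r}. \<exists>j\<in>{1..r}. EH i j \<and> u \<in> VG i \<and> v \<in> VG j)"

end

theory Submission
  imports Defs "Jordan_Normal_Form.Schur_Decomposition"
begin

definition matf :: "nat \<Rightarrow> (nat \<Rightarrow> 'v) \<Rightarrow> ('v \<Rightarrow> 'v \<Rightarrow> real) \<Rightarrow> real mat" where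
  "matf n f M = mat n n (\<lambda>(a, b). M (f a) (f b))"

definition mmul :: "'v set \<Rightarrow> ('v \<Rightarrow> 'v \<Rightarrow> real) \<Rightarrow> ('v \<Rightarrow> 'v \<Rightarrow> real) \<Rightarrow> 'v \<Rightarrow> 'v \<Rightarrow> real" where
  "mmul V M N a b = (\<Sum>c\<in>V. M a c * N c b)"

definition idf :: "'v \<Rightarrow> 'v \<Rightarrow> real" where
  "idf a b = (if a = b then 1 else 0)"

lemma matf_carrier[simp]: "matf n f M \<in> carrier_mat n n"
  unfolding matf_def by auto

lemma matf_dim[simp]: "dim_row (matf n f M) = n" "dim_col (matf n f M) = n"
  unfolding matf_def by auto

lemma vertex_enum_bij: "finite V \<Longrightarrow> bij_betw (vertex_enum V) {..<card V} V"
proof -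
  assume "finite V"
  then obtain h where "bij_betw h {0..<card V} V" using ex_bij_betw_nat_finite by blast
  hence "\<exists>f. bij_betw f {..<card V} V" by (auto simp: lessThan_atLeast0)
  thus ?thesis unfolding vertex_enum_def by (rule someI_ex)
qed

lemma mat_on_matf: "mat_on V M = matf (card V) (vertex_enum V) M"
  unfolding mat_on_def matf_def by simp

lemma matf_mult:
  assumes f: "bij_betw f {..<n} V"
  shows "matf n f (mmul V M N) = matf n f M * matf n f N"
proof (rule eq_matI)
  fix i j assume i: "i < dim_row (matf n f M * matf n f N)" and j: "j < dim_col (matf n f M * matf n f N)"
  hence i': "i < n" and j': "j < n" by (auto simp: matf_def)
  have "(matf n f M * matf n f N) $$ (i, j) = (\<Sum>k<n. M (f i) (f k) * N (f k) (f j))"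
    using i' j' by (simp add: matf_def scalar_prod_def atLeast0LessThan)
  also have "\<dots> = (\<Sum>c\<in>V. M (f i) c * N c (f j))"
    using sum.reindex_bij_betw[OF f, of "\<lambda>c. M (f i) c * N c (f j)"] by simp
  finally show "matf n f (mmul V M N) $$ (i, j) = (matf n f M * matf n f N) $$ (i, j)"
    using i' j' by (simp add: matf_def mmul_def)
qed (auto simp: matf_def)

lemma matf_id:
  assumes f: "bij_betw f {..<n} V"
  shows "matf n f idf = 1\<^sub>m n"
proof (rule eq_matI)
  fix i j assume "i < dim_row (1\<^sub>m n :: real mat)" "j < dim_col (1\<^sub>m n :: real mat)"
  hence ij: "i < n" "j < n" by auto
  have "f i = f j \<longleftrightarrow> i = j" using f ij unfolding bij_betw_def inj_on_def by auto
  thus "matf n f idf $$ (i, j) = 1\<^sub>m n $$ (i, j)" using ij by (simp add: matf_def idf_def)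
qed (auto simp: matf_def)

lemma matf_cong:
  assumes f: "bij_betw f {..<n} V" and "\<And>a b. a \<in> V \<Longrightarrow> b \<in> V \<Longrightarrow> M a b = M' a b"
  shows "matf n f M = matf n f M'"
proof -
  have "\<And>a. a < n \<Longrightarrow> f a \<in> V" using f bij_betwE by blast
  thus ?thesis unfolding matf_def using assms(2) by (intro eq_matI) auto
qed

lemma sim_matf:
  assumes f: "bij_betw f {..<n} V"
    and QP: "\<And>a b. a \<in> V \<Longrightarrow> b \<in> V \<Longrightarrow> mmul V Q P a b = idf a b"
    and MP: "\<And>a b. a \<in> V \<Longrightarrow> b \<in> V \<Longrightarrow> mmul V M P a b = mmul V P N a b"
  shows "char_poly (matf n f M) = char_poly (matf n f N)"
proof -
  let ?M = "matf n f M" and ?N = "matf n f N" and ?P = "matf n f P" and ?Q = "matf n f Q"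
  have "?Q * ?P = 1\<^sub>m n"
    using matf_mult[OF f, of Q P, symmetric] matf_cong[OF f QP] matf_id[OF f] by simp
  hence PQ: "?P * ?Q = 1\<^sub>m n" by (rule mat_mult_left_right_inverse[rotated 2]) auto
  have "?M * ?P = ?P * ?N"
    using matf_mult[OF f, of M P, symmetric] matf_mult[OF f, of P N, symmetric] matf_cong[OF f MP] by simp
  hence "?M * ?P * ?Q = ?P * ?N * ?Q" by simp
  hence "?M = ?P * ?N * ?Q" using PQ
    by (metis assoc_mult_mat matf_carrier right_mult_one_mat)
  hence "similar_mat_wit ?M ?N ?P ?Q"
    unfolding similar_mat_wit_def Let_def using PQ \<open>?Q * ?P = 1\<^sub>m n\<close> by (auto intro: mult_carrier_mat)
  thus ?thesis by (intro char_poly_similar) (auto simp: similar_mat_def)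
qed

lemma sum_idf_left: "finite V \<Longrightarrow> a \<in> V \<Longrightarrow> (\<Sum>c\<in>V. idf a c * X c) = X a"
proof -
  assume "finite V" "a \<in> V"
  have "(\<Sum>c\<in>V. idf a c * X c) = (\<Sum>c\<in>V. if a = c then X c else 0)"
    by (intro sum.cong) (auto simp: idf_def)
  thus ?thesis using \<open>finite V\<close> \<open>a \<in> V\<close> by simp
qed

lemma sum_idf_right: "finite V \<Longrightarrow> a \<in> V \<Longrightarrow> (\<Sum>c\<in>V. X c * idf c a) = X a"
proof -
  assume "finite V" "a \<in> V"
  have "(\<Sum>c\<in>V. X c * idf c a) = (\<Sum>c\<in>V. if c = a then X c else 0)"
    by (intro sum.cong) (auto simp: idf_def)
  thus ?thesis using \<open>finite V\<close> \<open>a \<in> V\<close> by simp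
qed

lemma perm_cp:
  assumes V: "finite V" and g: "bij_betw g {..<n} V" and \<sigma>: "bij_betw \<sigma> V V"
  shows "char_poly (matf n g (\<lambda>a b. M (\<sigma> a) (\<sigma> b))) = char_poly (matf n g M)"
proof -
  have inj: "inj_on \<sigma> V" and sV: "\<And>a. a \<in> V \<Longrightarrow> \<sigma> a \<in> V" using \<sigma> by (auto simp: bij_betw_def)
  let ?P = "\<lambda>a b. idf a (\<sigma> b)" and ?Q = "\<lambda>a b. idf (\<sigma> a) b"
  have "char_poly (matf n g M) = char_poly (matf n g (\<lambda>a b. M (\<sigma> a) (\<sigma> b)))"
  proof (rule sim_matf[OF g, where P = ?P and Q = ?Q])
    fix a b assume a: "a \<in> V" and b: "b \<in> V"
    have "mmul V ?Q ?P a b = idf (\<sigma> a) (\<sigma> b)" unfolding mmul_def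
      by (rule sum_idf_left[OF V sV[OF a]])
    moreover have "idf (\<sigma> a) (\<sigma> b) = idf a b" using inj a b unfolding idf_def inj_on_def by auto
    ultimately show "mmul V ?Q ?P a b = idf a b" by simp
    have "mmul V M ?P a b = M a (\<sigma> b)" unfolding mmul_def
      using sum_idf_right[OF V sV[OF b], of "M a"] by simp
    moreover have "mmul V ?P (\<lambda>a b. M (\<sigma> a) (\<sigma> b)) a b = (\<Sum>c\<in>V. idf a c * M c (\<sigma> b))"
      unfolding mmul_def using sum.reindex_bij_betw[OF \<sigma>, of "\<lambda>c. idf a c * M c (\<sigma> b)"] by simp
    ultimately show "mmul V M ?P a b = mmul V ?P (\<lambda>a b. M (\<sigma> a) (\<sigma> b)) a b"
      using sum_idf_left[OF V a] by simp
  qed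
  thus ?thesis by simp
qed

lemma enum_cp:
  assumes V: "finite V" and f: "bij_betw f {..<n} V" and g: "bij_betw g {..<n} V"
  shows "char_poly (matf n f M) = char_poly (matf n g M)"
proof -
  define \<sigma> where "\<sigma> = f \<circ> inv_into {..<n} g"
  have ig: "bij_betw (inv_into {..<n} g) V {..<n}" using g by (rule bij_betw_inv_into)
  have \<sigma>: "bij_betw \<sigma> V V" unfolding \<sigma>_def using bij_betw_trans[OF ig f] .
  have "matf n f M = matf n g (\<lambda>a b. M (\<sigma> a) (\<sigma> b))"
  proof -
    have gi: "\<And>i. i < n \<Longrightarrow> \<sigma> (g i) = f i" unfolding \<sigma>_def using g
      by (simp add: bij_betw_def inv_into_f_f)
    show ?thesis using gi by (intro eq_matI) (auto simp: matf_def)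
  qed
  thus ?thesis using perm_cp[OF V g \<sigma>] by simp
qed

definition cp :: "'v set \<Rightarrow> ('v \<Rightarrow> 'v \<Rightarrow> real) \<Rightarrow> real poly" where
  "cp V M = char_poly (mat_on V M)"

lemma cp_enum:
  assumes V: "finite V" and f: "bij_betw f {..<n} V"
  shows "cp V M = char_poly (matf n f M)"
proof -
  have n: "n = card V" using bij_betw_same_card[OF f] by simp
  show ?thesis unfolding cp_def mat_on_matf using enum_cp[OF V f, of "vertex_enum V"] vertex_enum_bij[OF V] n by simp
qed

lemma cp_cong:
  assumes V: "finite V" and "\<And>a b. a \<in> V \<Longrightarrow> b \<in> V \<Longrightarrow> M a b = M' a b"
  shows "cp V M = cp V M'"
  unfolding cp_def mat_on_matf using matf_cong[OF vertex_enum_bij[OF V] assms(2)] by simp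

lemma cp_sim:
  assumes V: "finite V"
    and QP: "\<And>a b. a \<in> V \<Longrightarrow> b \<in> V \<Longrightarrow> mmul V Q P a b = idf a b"
    and MP: "\<And>a b. a \<in> V \<Longrightarrow> b \<in> V \<Longrightarrow> mmul V M P a b = mmul V P N a b"
  shows "cp V M = cp V N"
  unfolding cp_def mat_on_matf using sim_matf[OF vertex_enum_bij[OF V] QP MP] by simp

lemma cp_transport:
  assumes W: "finite W" and h: "bij_betw h W V"
  shows "cp W (\<lambda>a b. M (h a) (h b)) = cp V M"
proof -
  have V: "finite V" using h W bij_betw_finite by blast
  have e: "bij_betw (h \<circ> vertex_enum W) {..<card W} V"
    using bij_betw_trans[OF vertex_enum_bij[OF W] h] .
  have "cp W (\<lambda>a b. M (h a) (h b)) = char_poly (matf (card W) (h \<circ> vertex_enum W) M)"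
    unfolding cp_def mat_on_matf matf_def by simp
  thus ?thesis using cp_enum[OF V e] by simp
qed

lemma cp_monic: "finite V \<Longrightarrow> monic (cp V M) \<and> Polynomial.degree (cp V M) = card V"
proof -
  have "mat_on V M \<in> carrier_mat (card V) (card V)" by (simp add: mat_on_def)
  from degree_monic_char_poly[OF this] show ?thesis unfolding cp_def by auto
qed

lemma cp_nonzero: "finite V \<Longrightarrow> cp V M \<noteq> 0"
  using cp_monic[of V M] by auto

lemma char_poly_four_block_ur_zero:
  fixes A1 :: "'a :: idom mat"
  assumes A1: "A1 \<in> carrier_mat n n" and A3: "A3 \<in> carrier_mat m n" and A4: "A4 \<in> carrier_mat m m"
  shows "char_poly (four_block_mat A1 (0\<^sub>m n m) A3 A4) = char_poly A1 * char_poly A4"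
proof -
  let ?cm = "\<lambda> A. [:0, 1:] \<cdot>\<^sub>m 1\<^sub>m (dim_row A) + map_mat (\<lambda>a. [:- a:]) A"
  let ?B3 = "map_mat (\<lambda>a. [:- a:]) A3"
  have "char_poly (four_block_mat A1 (0\<^sub>m n m) A3 A4) = det (?cm (four_block_mat A1 (0\<^sub>m n m) A3 A4))"
    unfolding char_poly_defs by simp
  also have "?cm (four_block_mat A1 (0\<^sub>m n m) A3 A4) = four_block_mat (?cm A1) (0\<^sub>m n m) ?B3 (?cm A4)"
    by (rule eq_matI, insert A1 A3 A4, auto simp: one_poly_def)
  also have "det \<dots> = det (?cm A1) * det (?cm A4)"
    by (rule det_four_block_mat_upper_right_zero[OF _ refl], insert A1 A3 A4, auto)
  also have "\<dots> = char_poly A1 * char_poly A4" unfolding char_poly_defs ..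
  finally show ?thesis .
qed

lemma bij_concat:
  fixes n1 n2 :: nat
  assumes f1: "bij_betw f1 {..<n1} V1" and f2: "bij_betw f2 {..<n2} V2" and dj: "V1 \<inter> V2 = {}"
  shows "bij_betw (\<lambda>k. if k < n1 then f1 k else f2 (k - n1)) {..<n1+n2} (V1 \<union> V2)"
proof -
  let ?f = "\<lambda>k. if k < n1 then f1 k else f2 (k - n1)"
  have b1: "bij_betw ?f {..<n1} V1" using f1 by (rule bij_betw_cong[THEN iffD1, rotated]) auto
  have sh: "bij_betw (\<lambda>k. k - n1) {n1..<n1+n2} {..<n2}"
    by (rule bij_betw_byWitness[where f' = "\<lambda>k. k + n1"]) (auto; arith)+
  have "bij_betw (f2 \<circ> (\<lambda>k. k - n1)) {n1..<n1+n2} V2" using bij_betw_trans[OF sh f2] .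
  hence b2: "bij_betw ?f {n1..<n1+n2} V2" by (rule bij_betw_cong[THEN iffD1, rotated]) auto
  have "bij_betw ?f ({..<n1} \<union> {n1..<n1+n2}) (V1 \<union> V2)"
    by (rule bij_betw_combine[OF b1 b2 dj])
  moreover have "{..<n1} \<union> {n1..<n1+n2} = {..<n1+n2}" by auto
  ultimately show ?thesis by simp
qed

lemma cp_block:
  assumes V1: "finite V1" and V2: "finite V2" and dj: "V1 \<inter> V2 = {}"
    and z: "\<And>a b. a \<in> V1 \<Longrightarrow> b \<in> V2 \<Longrightarrow> M a b = 0"
  shows "cp (V1 \<union> V2) M = cp V1 M * cp V2 M"
proof -
  let ?n1 = "card V1" and ?n2 = "card V2"
  let ?f1 = "vertex_enum V1" and ?f2 = "vertex_enum V2"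
  let ?f = "\<lambda>k. if k < ?n1 then ?f1 k else ?f2 (k - ?n1)"
  have e1: "bij_betw ?f1 {..<?n1} V1" by (rule vertex_enum_bij[OF V1])
  have e2: "bij_betw ?f2 {..<?n2} V2" by (rule vertex_enum_bij[OF V2])
  have f: "bij_betw ?f {..<?n1+?n2} (V1 \<union> V2)" by (rule bij_concat[OF e1 e2 dj])
  have i1: "\<And>k. k < ?n1 \<Longrightarrow> ?f1 k \<in> V1" using e1 bij_betwE by blast
  have i2: "\<And>k. k < ?n2 \<Longrightarrow> ?f2 k \<in> V2" using e2 bij_betwE by blast
  have "matf (?n1+?n2) ?f M = four_block_mat (matf ?n1 ?f1 M) (0\<^sub>m ?n1 ?n2)
      (mat ?n2 ?n1 (\<lambda>(a,b). M (?f2 a) (?f1 b))) (matf ?n2 ?f2 M)"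
    by (rule eq_matI) (auto simp: matf_def z i1 i2)
  hence "cp (V1 \<union> V2) M = char_poly (matf ?n1 ?f1 M) * char_poly (matf ?n2 ?f2 M)"
    using cp_enum[OF _ f] V1 V2 char_poly_four_block_ur_zero[of "matf ?n1 ?f1 M" ?n1 _ ?n2 "matf ?n2 ?f2 M"]
    by simp
  thus ?thesis using cp_enum[OF V1 e1] cp_enum[OF V2 e2] by simp
qed

lemma cp_empty: "cp {} M = 1"
proof -
  have "mat_on {} M \<in> carrier_mat 0 0" by (simp add: mat_on_def)
  moreover have "upper_triangular (mat_on {} M)" by (simp add: mat_on_def upper_triangular_def)
  ultimately show ?thesis unfolding cp_def
    by (subst char_poly_upper_triangular) (auto simp: diag_mat_def mat_on_def)
qed

lemma cp_single: "cp {x} M = [:- M x x, 1:]"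
proof -
  have "mat_on {x} M \<in> carrier_mat 1 1" by (simp add: mat_on_def)
  moreover have "upper_triangular (mat_on {x} M)" by (simp add: mat_on_def upper_triangular_def)
  moreover have "vertex_enum {x} 0 = x" using vertex_enum_bij[of "{x}"] bij_betwE by fastforce
  ultimately show ?thesis unfolding cp_def
    by (subst char_poly_upper_triangular) (auto simp: diag_mat_def mat_on_def)
qed

lemma cp_blockdiag:
  assumes I: "finite I" and W: "\<And>i. i \<in> I \<Longrightarrow> finite (W i)"
    and dj: "\<And>i j. i \<in> I \<Longrightarrow> j \<in> I \<Longrightarrow> i \<noteq> j \<Longrightarrow> W i \<inter> W j = {}"
    and z: "\<And>i j a b. i \<in> I \<Longrightarrow> j \<in> I \<Longrightarrow> i \<noteq> j \<Longrightarrow> a \<in> W i \<Longrightarrow> b \<in> W j \<Longrightarrow> M a b = 0"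
  shows "cp (\<Union>i\<in>I. W i) M = (\<Prod>i\<in>I. cp (W i) M)"
  using I W dj z
proof (induction I rule: finite_induct)
  case empty
  then show ?case by (simp add: cp_empty)
next
  case (insert i I)
  have "cp (\<Union>i\<in>insert i I. W i) M = cp (W i \<union> (\<Union>i\<in>I. W i)) M" by simp
  also have "\<dots> = cp (W i) M * cp (\<Union>i\<in>I. W i) M"
  proof (rule cp_block)
    show "finite (W i)" using insert by auto
    show "finite (\<Union>i\<in>I. W i)" using insert by auto
    show "W i \<inter> \<Union> (W ` I) = {}" using insert.prems(2) insert.hyps by fastforce
    show "\<And>a b. a \<in> W i \<Longrightarrow> b \<in> \<Union> (W ` I) \<Longrightarrow> M a b = 0"
      using insert.prems(3) insert.hyps by fastforce
  qed
  also have "cp (\<Union>i\<in>I. W i) M = (\<Prod>i\<in>I. cp (W i) M)"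
  proof (rule insert.IH)
    fix i' j a b assume "i' \<in> I" "j \<in> I" "i' \<noteq> j" "a \<in> W i'" "b \<in> W j"
    thus "M a b = 0" using insert.prems(3)[of i' j a b] by blast
  qed (use insert in auto)
  finally show ?case using insert.hyps by simp
qed

lemma collapse:
  fixes B :: "'i \<Rightarrow> 'v set" and v :: "'i \<Rightarrow> 'v" and K :: "'i \<Rightarrow> 'i \<Rightarrow> real"
    and M :: "'v \<Rightarrow> 'v \<Rightarrow> real"
  assumes I: "finite I" and B: "\<And>i. i \<in> I \<Longrightarrow> finite (B i)"
    and vB: "\<And>i. i \<in> I \<Longrightarrow> v i \<in> B i"
    and dj: "\<And>i j. i \<in> I \<Longrightarrow> j \<in> I \<Longrightarrow> i \<noteq> j \<Longrightarrow> B i \<inter> B j = {}"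
    and C1: "\<And>i j a. i \<in> I \<Longrightarrow> j \<in> I \<Longrightarrow> a \<in> B j \<Longrightarrow> (\<Sum>b\<in>B i. M a b) = K j i"
    and C2: "\<And>i j a u. i \<in> I \<Longrightarrow> j \<in> I \<Longrightarrow> i \<noteq> j \<Longrightarrow> a \<in> B j \<Longrightarrow> u \<in> B i \<Longrightarrow> M a u = M a (v i)"
    and C3: "\<And>i u. i \<in> I \<Longrightarrow> u \<in> B i \<Longrightarrow> (\<Sum>w\<in>B i. M w u) = (\<Sum>w\<in>B i. M w (v i))"
  shows "cp (\<Union>i\<in>I. B i) M = cp I K * (\<Prod>i\<in>I. cp (B i - {v i}) (\<lambda>w u. M w u - M w (v i)))"
proof -
  define V where "V = (\<Union>i\<in>I. B i)"
  have V: "finite V" unfolding V_def using I B by auto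
  define blk where "blk a = (THE i. i \<in> I \<and> a \<in> B i)" for a
  have blk_eq: "blk a = i" if "i \<in> I" "a \<in> B i" for a i
    unfolding blk_def using that dj by (intro the_equality) blast+
  have blk_in: "blk a \<in> I" "a \<in> B (blk a)" if "a \<in> V" for a
    using that blk_eq unfolding V_def by auto
  have blk_v: "blk (v i) = i" if "i \<in> I" for i using blk_eq vB that by blast
  have BV: "B i \<subseteq> V" if "i \<in> I" for i using that unfolding V_def by auto
  have sumB: "(\<Sum>c\<in>V. (if blk c = i then X c else 0)) = (\<Sum>c\<in>B i. X c)" if "i \<in> I" for i X
  proof -
    have "{c \<in> V. blk c = i} = B i" using blk_in blk_eq BV that by blast
    thus ?thesis using V by (simp add: sum.inter_filter[symmetric])
  qed
  define n where "n i = real (card (B i))" for i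
  have npos: "n i > 0" if "i \<in> I" for i using vB[OF that] B[OF that] unfolding n_def
    by (simp add: card_gt_0_iff) blast
  define P where "P a b = (if b = v (blk b) then (if blk a = blk b then 1 else 0)
      else idf a b - idf a (v (blk b)))" for a b
  define Q where "Q a b = (if a = v (blk a) then 0 else idf a b)
      + (if a = v (blk a) then 1 else -1) * (if blk b = blk a then 1 / n (blk a) else 0)" for a b
  define N where "N a b = (if b = v (blk b) then (if a = v (blk a) then K (blk a) (blk b) else 0)
      else (if a \<noteq> v (blk a) \<and> blk a = blk b then M a b - M a (v (blk b)) else 0))" for a b
  have sumP: "(\<Sum>c\<in>B i. P c b) = (if b = v (blk b) then (if i = blk b then n i else 0) else 0)"
    if i: "i \<in> I" and b: "b \<in> V" for i b
  proof (cases "b = v (blk b)")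
    case True
    have "(\<Sum>c\<in>B i. P c b) = (\<Sum>c\<in>B i. (if i = blk b then 1 else 0))"
      using True blk_eq[OF i] by (intro sum.cong) (auto simp: P_def)
    thus ?thesis using True by (simp add: n_def)
  next
    case False
    have "(\<Sum>c\<in>B i. P c b) = (\<Sum>c\<in>B i. idf c b - idf c (v (blk b)))"
      using False by (intro sum.cong) (auto simp: P_def)
    also have "\<dots> = (\<Sum>c\<in>B i. idf c b) - (\<Sum>c\<in>B i. idf c (v (blk b)))"
      by (simp add: sum_subtractf)
    also have "(\<Sum>c\<in>B i. idf c b) = (if b \<in> B i then 1 else 0)"
      using B[OF i] by (simp add: idf_def)
    also have "(\<Sum>c\<in>B i. idf c (v (blk b))) = (if v (blk b) \<in> B i then 1 else 0)"
      using B[OF i] by (simp add: idf_def)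
    also have "(b \<in> B i) = (v (blk b) \<in> B i)"
      using blk_in[OF b] vB blk_eq i blk_v by metis
    finally show ?thesis using False by simp
  qed
  have QP: "mmul V Q P a b = idf a b" if a: "a \<in> V" and b: "b \<in> V" for a b
  proof -
    let ?i = "blk a"
    have i: "?i \<in> I" using blk_in[OF a] by auto
    have "mmul V Q P a b = (\<Sum>c\<in>V. (if a = v ?i then 0 else idf a c * P c b)
         + (if a = v ?i then 1 else -1) / n ?i * (if blk c = ?i then P c b else 0))"
      unfolding mmul_def Q_def by (intro sum.cong) (auto simp: algebra_simps)
    also have "\<dots> = (if a = v ?i then 0 else P a b)
        + (if a = v ?i then 1 else -1) / n ?i * (\<Sum>c\<in>B ?i. P c b)"
      using sum_idf_left[OF V a, of "\<lambda>c. P c b"] sumB[OF i, of "\<lambda>c. P c b"]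
      by (simp add: sum.distrib sum_distrib_left[symmetric] sum_divide_distrib[symmetric] sum_negf)
    also have "\<dots> = idf a b"
      using sumP[OF i b] npos[OF i] blk_in[OF a] blk_in[OF b] blk_v
      by (auto simp: P_def idf_def)
    finally show ?thesis .
  qed
  have MP: "mmul V M P a b = mmul V P N a b" if a: "a \<in> V" and b: "b \<in> V" for a b
  proof -
    let ?i = "blk a" and ?j = "blk b"
    have i: "?i \<in> I" and aB: "a \<in> B ?i" using blk_in[OF a] by auto
    have j: "?j \<in> I" and bB: "b \<in> B ?j" using blk_in[OF b] by auto
    show ?thesis
    proof (cases "b = v ?j")
      case True
      have "mmul V M P a b = (\<Sum>c\<in>V. if blk c = ?j then M a c else 0)"
        unfolding mmul_def using True by (intro sum.cong) (auto simp: P_def)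
      also have "\<dots> = K ?i ?j" using sumB[OF j, of "M a"] C1[OF j i aB] by simp
      also have "\<dots> = (\<Sum>c\<in>V. if c = v ?i then K ?i ?j else 0)"
        using V i BV vB by auto
      also have "\<dots> = mmul V P N a b"
        unfolding mmul_def
      proof (intro sum.cong refl)
        fix c assume c: "c \<in> V"
        show "(if c = v ?i then K ?i ?j else 0) = P a c * N c b"
          using True blk_v[OF i] blk_v[OF j] by (auto simp: P_def N_def)
      qed
      finally show ?thesis .
    next
      case False
      let ?G = "\<lambda>c. M c b - M c (v ?j)"
      have "mmul V M P a b = (\<Sum>c\<in>V. M a c * idf c b - M a c * idf c (v ?j))"
        unfolding mmul_def using False by (intro sum.cong) (auto simp: P_def algebra_simps)
      also have "\<dots> = M a b - M a (v ?j)"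
        using sum_idf_right[OF V b, of "M a"] sum_idf_right[OF V BV[OF j, THEN subsetD, OF vB[OF j]], of "M a"]
        by (simp add: sum_subtractf)
      finally have L: "mmul V M P a b = ?G a" .
      have "mmul V P N a b = (\<Sum>c\<in>V. if blk c = ?j then (if c \<noteq> v ?j then (idf a c - idf a (v ?j)) * ?G c else 0) else 0)"
        unfolding mmul_def
      proof (intro sum.cong refl)
        fix c assume c: "c \<in> V"
        show "P a c * N c b = (if blk c = ?j then (if c \<noteq> v ?j then (idf a c - idf a (v ?j)) * ?G c else 0) else 0)"
          using False by (auto simp: P_def N_def)
      qed
      also have "\<dots> = (\<Sum>c\<in>B ?j. (if c \<noteq> v ?j then (idf a c - idf a (v ?j)) * ?G c else 0))"
        by (rule sumB[OF j])
      also have "\<dots> = (\<Sum>c\<in>B ?j - {v ?j}. (idf a c - idf a (v ?j)) * ?G c)"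
      proof -
        have se: "{c \<in> B ?j. c \<noteq> v ?j} = B ?j - {v ?j}" by auto
        show ?thesis using sum.inter_filter[OF B[OF j], of "\<lambda>c. (idf a c - idf a (v ?j)) * ?G c" "\<lambda>c. c \<noteq> v ?j"]
          unfolding se by simp
      qed
      finally have R: "mmul V P N a b = (\<Sum>c\<in>B ?j - {v ?j}. (idf a c - idf a (v ?j)) * ?G c)" .
      have fin: "finite (B ?j - {v ?j})" using B[OF j] by auto
      consider "a \<in> B ?j" "a \<noteq> v ?j" | "a = v ?j" | "a \<notin> B ?j" by blast
      thus ?thesis
      proof cases
        case 1
        have "(\<Sum>c\<in>B ?j - {v ?j}. (idf a c - idf a (v ?j)) * ?G c) = (\<Sum>c\<in>B ?j - {v ?j}. idf a c * ?G c)"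
          using 1 by (intro sum.cong) (auto simp: idf_def)
        also have "\<dots> = ?G a" using sum_idf_left[OF fin, of a ?G] 1 by simp
        finally show ?thesis using L R by simp
      next
        case 2
        have "(\<Sum>c\<in>B ?j - {v ?j}. (idf a c - idf a (v ?j)) * ?G c) = - (\<Sum>c\<in>B ?j - {v ?j}. ?G c)"
          using 2 by (simp add: sum_negf[symmetric]) (intro sum.cong, auto simp: idf_def)
        also have "(\<Sum>c\<in>B ?j - {v ?j}. ?G c) = (\<Sum>c\<in>B ?j. ?G c) - ?G (v ?j)"
          using B[OF j] vB[OF j] by (simp add: sum_diff1)
        also have "(\<Sum>c\<in>B ?j. ?G c) = 0" using C3[OF j bB] by (simp add: sum_subtractf)
        finally show ?thesis using L R 2 by simp
      next
        case 3
        have "(\<Sum>c\<in>B ?j - {v ?j}. (idf a c - idf a (v ?j)) * ?G c) = 0"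
          using 3 vB[OF j] by (intro sum.neutral) (auto simp: idf_def)
        moreover have "?i \<noteq> ?j" using 3 aB by auto
        ultimately show ?thesis using L R C2[OF j i _ aB bB] by simp
      qed
    qed
  qed
  have "cp V M = cp V N" by (rule cp_sim[OF V QP MP])
  define D where "D = v ` I"
  have DV: "D \<subseteq> V" unfolding D_def using vB BV by auto
  have Deq: "c \<in> D \<longleftrightarrow> c = v (blk c)" if "c \<in> V" for c
    unfolding D_def using that blk_in blk_v by force
  have "V = D \<union> (V - D)" using DV by auto
  have "cp (D \<union> (V - D)) N = cp D N * cp (V - D) N"
  proof (rule cp_block)
    show "finite D" using V DV finite_subset by blast
    show "finite (V - D)" using V by auto
    fix a b assume "a \<in> D" "b \<in> V - D"
    thus "N a b = 0" using Deq DV by (auto simp: N_def)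
  qed simp
  hence "cp V N = cp D N * cp (V - D) N" using \<open>V = D \<union> (V - D)\<close> by simp
  also have "cp D N = cp I K"
  proof -
    have inj: "inj_on v I" using blk_v by (metis inj_on_inverseI)
    have "cp I (\<lambda>i j. N (v i) (v j)) = cp D N"
      unfolding D_def by (rule cp_transport[OF I]) (simp add: inj inj_on_imp_bij_betw)
    moreover have "cp I (\<lambda>i j. N (v i) (v j)) = cp I K"
      using blk_v by (intro cp_cong[OF I]) (auto simp: N_def)
    ultimately show ?thesis by simp
  qed
  also have "V - D = (\<Union>i\<in>I. B i - {v i})"
    unfolding V_def D_def using blk_v blk_eq vB by auto (metis blk_eq blk_v)
  also have "cp (\<Union>i\<in>I. B i - {v i}) N = (\<Prod>i\<in>I. cp (B i - {v i}) N)"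
  proof (rule cp_blockdiag[OF I])
    show "\<And>i. i \<in> I \<Longrightarrow> finite (B i - {v i})" using B by auto
    show "\<And>i j. i \<in> I \<Longrightarrow> j \<in> I \<Longrightarrow> i \<noteq> j \<Longrightarrow> (B i - {v i}) \<inter> (B j - {v j}) = {}"
      using dj by auto
    show "\<And>i j a b. i \<in> I \<Longrightarrow> j \<in> I \<Longrightarrow> i \<noteq> j \<Longrightarrow> a \<in> B i - {v i} \<Longrightarrow> b \<in> B j - {v j} \<Longrightarrow> N a b = 0"
      using blk_eq by (auto simp: N_def)
  qed
  also have "(\<Prod>i\<in>I. cp (B i - {v i}) N) = (\<Prod>i\<in>I. cp (B i - {v i}) (\<lambda>w u. M w u - M w (v i)))"
  proof (intro prod.cong refl cp_cong)
    fix i a b assume "i \<in> I" "a \<in> B i - {v i}" "b \<in> B i - {v i}"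
    thus "N a b = M a b - M a (v i)" using blk_eq by (auto simp: N_def)
  qed (use B in auto)
  finally show ?thesis unfolding V_def[symmetric] using \<open>cp V M = cp V N\<close> by simp
qed

lemma split_poly:
  fixes p :: "real poly"
  assumes "monic p" "size (proots p) = Polynomial.degree p"
  shows "p = (\<Prod>x\<in>#proots p. [:-x, 1:])"
  using assms
proof (induction "Polynomial.degree p" arbitrary: p)
  case 0
  have "p = [:coeff p 0:]" using degree_0_id[of p] 0 by simp
  also have "coeff p 0 = 1" using 0 by simp
  finally have "p = 1" by (simp add: one_pCons)
  then show ?case by simp
next
  case (Suc k)
  hence "proots p \<noteq> {#}" by auto
  then obtain x where x: "x \<in># proots p" by blast
  have p0: "p \<noteq> 0" using Suc.prems by auto
  hence "poly p x = 0" using x by simp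
  then obtain q where q: "p = [:-x, 1:] * q" using poly_eq_0_iff_dvd by (metis dvdE)
  have q0: "q \<noteq> 0" using p0 q by auto
  have "Polynomial.degree p = Polynomial.degree [:-x, 1:] + Polynomial.degree q"
    using q q0 degree_mult_eq[of "[:-x,1:]" q] by auto
  hence dq: "Polynomial.degree q = k" using Suc.hyps by simp
  have "lead_coeff p = lead_coeff [:-x,1:] * lead_coeff q" unfolding q by (rule lead_coeff_mult)
  hence mq: "monic q" using Suc.prems(1) by simp
  have "proots p = proots [:-x,1:] + proots q" unfolding q by (rule proots_mult) (use q0 in auto)
  hence pr: "proots p = {#x#} + proots q" by simp
  have "size (proots q) = Polynomial.degree q" using Suc.prems(2) pr dq Suc.hyps by simp
  hence "q = (\<Prod>x\<in>#proots q. [:-x, 1:])" using Suc.hyps(1)[OF dq[symmetric] mq] by simp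
  thus ?case using q pr by simp
qed

lemma sum_ind_card: "finite A \<Longrightarrow> (\<Sum>b\<in>A. (if P b then 1 else 0::real)) = real (card {b\<in>A. P b})"
  by (simp add: sum.inter_filter[symmetric])

lemma diag_right: "finite V \<Longrightarrow> b \<in> V \<Longrightarrow> mmul V M (\<lambda>a b. idf a b * p b) a b = M a b * p b"
proof -
  assume V: "finite V" and b: "b \<in> V"
  have "mmul V M (\<lambda>a b. idf a b * p b) a b = (\<Sum>c\<in>V. (M a c * p b) * idf c b)"
    unfolding mmul_def by (simp add: algebra_simps)
  thus ?thesis using sum_idf_right[OF V b, of "\<lambda>c. M a c * p b"] by simp
qed

lemma diag_left: "finite V \<Longrightarrow> a \<in> V \<Longrightarrow> mmul V (\<lambda>a b. idf a b * p a) M a b = p a * M a b"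
proof -
  assume V: "finite V" and a: "a \<in> V"
  have "mmul V (\<lambda>a b. idf a b * p a) M a b = (\<Sum>c\<in>V. idf a c * (p a * M c b))"
    unfolding mmul_def by (simp add: algebra_simps)
  thus ?thesis using sum_idf_left[OF V a, of "\<lambda>c. p a * M c b"] by simp
qed

lemma proots_linear_list: "proots (\<Prod>a\<leftarrow>xs. [:-a, 1:]) = mset (xs :: real list)"
proof (induction xs)
  case (Cons a xs)
  have nz: "(\<Prod>a\<leftarrow>xs. [:-a, 1:]) \<noteq> (0 :: real poly)"
  proof
    assume "(\<Prod>a\<leftarrow>xs. [:-a, 1:]) = (0 :: real poly)"
    hence "0 \<in> set (map (\<lambda>a. [:-a, 1:]) xs)" by (simp only: prod_list_zero_iff)
    thus False by auto
  qed
  have "proots (\<Prod>a\<leftarrow>a # xs. [:-a, 1:]) = proots [:-a, 1:] + proots (\<Prod>a\<leftarrow>xs. [:-a, 1:])"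
    unfolding prod_list.Cons list.map by (rule proots_mult) (use nz in auto)
  thus ?case using Cons by simp
qed simp

lemma transform_spec:
  fixes A :: "'v \<Rightarrow> 'v \<Rightarrow> real"
  assumes V: "finite V" and L: "proots (cp V A) = L" and sz: "size L = card V"
  shows "proots (cp V (\<lambda>a b. (if a = b then c else 0) - s * A a b)) = image_mset (\<lambda>x. c - s * x) L"
proof -
  let ?n = "card V"
  let ?A = "mat_on V A"
  have A: "?A \<in> carrier_mat ?n ?n" by (simp add: mat_on_def)
  have mon: "monic (cp V A)" "Polynomial.degree (cp V A) = ?n" using cp_monic[OF V, of A] by auto
  obtain es where es: "mset es = L" using ex_mset by blast
  have "cp V A = (\<Prod>x\<in>#L. [:-x, 1:])" using split_poly[OF mon(1)] mon(2) L sz by simp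
  also have "\<dots> = (\<Prod>a\<leftarrow>es. [:-a, 1:])" unfolding es[symmetric]
    by (metis mset_map prod_mset_prod_list)
  finally have c: "char_poly ?A = (\<Prod>a\<leftarrow>es. [:-a, 1:])" unfolding cp_def .
  obtain B P Q where sd: "schur_decomposition ?A es = (B, P, Q)" by (cases "schur_decomposition ?A es") auto
  from schur_decomposition[OF A c sd] have wit: "similar_mat_wit ?A B P Q"
    and ut: "upper_triangular B" and dg: "diag_mat B = es" by auto
  note w = similar_mat_witD2[OF A wit]
  let ?C = "c \<cdot>\<^sub>m 1\<^sub>m ?n + (-s) \<cdot>\<^sub>m B"
  have eqA: "mat_on V (\<lambda>a b. (if a = b then c else 0) - s * A a b) = c \<cdot>\<^sub>m 1\<^sub>m ?n + (-s) \<cdot>\<^sub>m ?A"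
    using vertex_enum_bij[OF V] unfolding bij_betw_def inj_on_def
    by (intro eq_matI) (auto simp: mat_on_def)
  have C: "?C \<in> carrier_mat ?n ?n" using w by auto
  have "P * ?C = P * (c \<cdot>\<^sub>m 1\<^sub>m ?n) + P * ((-s) \<cdot>\<^sub>m B)"
    using w by (intro mult_add_distrib_mat[of P ?n ?n]) auto
  also have "P * (c \<cdot>\<^sub>m 1\<^sub>m ?n) = c \<cdot>\<^sub>m P"
    using w mult_smult_distrib[of P ?n ?n "1\<^sub>m ?n" ?n c] by simp
  also have "P * ((-s) \<cdot>\<^sub>m B) = (-s) \<cdot>\<^sub>m (P * B)"
    using w mult_smult_distrib[of P ?n ?n B ?n "-s"] by simp
  finally have PC: "P * ?C = c \<cdot>\<^sub>m P + (-s) \<cdot>\<^sub>m (P * B)" .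
  have "P * ?C * Q = (c \<cdot>\<^sub>m P) * Q + ((-s) \<cdot>\<^sub>m (P * B)) * Q"
    unfolding PC using w by (intro add_mult_distrib_mat[of _ ?n ?n]) auto
  also have "(c \<cdot>\<^sub>m P) * Q = c \<cdot>\<^sub>m (P * Q)"
    using w mult_smult_assoc_mat[of P ?n ?n Q ?n c] by simp
  also have "((-s) \<cdot>\<^sub>m (P * B)) * Q = (-s) \<cdot>\<^sub>m (P * B * Q)"
    using w mult_smult_assoc_mat[of "P * B" ?n ?n Q ?n "-s"] by simp
  finally have "P * ?C * Q = c \<cdot>\<^sub>m (P * Q) + (-s) \<cdot>\<^sub>m (P * B * Q)" .
  also have "\<dots> = c \<cdot>\<^sub>m 1\<^sub>m ?n + (-s) \<cdot>\<^sub>m ?A" using w by simp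
  finally have eqC: "P * ?C * Q = c \<cdot>\<^sub>m 1\<^sub>m ?n + (-s) \<cdot>\<^sub>m ?A" .
  have "similar_mat_wit (c \<cdot>\<^sub>m 1\<^sub>m ?n + (-s) \<cdot>\<^sub>m ?A) ?C P Q"
    by (rule similar_mat_witI[OF w(1) w(2) eqC[symmetric]]) (use w C in auto)
  hence "char_poly (c \<cdot>\<^sub>m 1\<^sub>m ?n + (-s) \<cdot>\<^sub>m ?A) = char_poly ?C"
    by (intro char_poly_similar) (auto simp: similar_mat_def)
  also have "\<dots> = (\<Prod>a\<leftarrow>diag_mat ?C. [:-a, 1:])"
    by (rule char_poly_upper_triangular[OF C]) (use ut w in \<open>auto simp: upper_triangular_def\<close>)
  also have "diag_mat ?C = map (\<lambda>x. c - s * x) es"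
    using dg w by (intro nth_equalityI) (auto simp: diag_mat_def)
  finally have "cp V (\<lambda>a b. (if a = b then c else 0) - s * A a b) = (\<Prod>a\<leftarrow>map (\<lambda>x. c - s * x) es. [:-a, 1:])"
    unfolding cp_def eqA .
  also have "proots \<dots> = mset (map (\<lambda>x. c - s * x) es)"
    by (rule proots_linear_list)
  finally show ?thesis using es by simp
qed

theorem theorem6p4:
  fixes r :: nat and EH :: "nat \<Rightarrow> nat \<Rightarrow> bool"
    and VG :: "nat \<Rightarrow> 'v set" and EG :: "nat \<Rightarrow> 'v \<Rightarrow> 'v \<Rightarrow> bool"
    and d :: "nat \<Rightarrow> nat" and lam :: "nat \<Rightarrow> nat \<Rightarrow> real" and s :: real
  assumes H: "simple_graph {1..r} EH" "connected_graph {1..r} EH"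
    and Gi: "\<And>i. i \<in> {1..r} \<Longrightarrow> simple_graph (VG i) (EG i)"
    and nonempty: "\<And>i. i \<in> {1..r} \<Longrightarrow> VG i \<noteq> {}"
    and reg: "\<And>i. i \<in> {1..r} \<Longrightarrow> regular (VG i) (EG i) (d i)"
    and disj: "\<And>i j. i \<in> {1..r} \<Longrightarrow> j \<in> {1..r} \<Longrightarrow> i \<noteq> j \<Longrightarrow> VG i \<inter> VG j = {}"
    and eig: "\<And>i. i \<in> {1..r} \<Longrightarrow>
       spec_on (VG i) (adj_mat (VG i) (EG i)) = image_mset (lam i) (mset_set {1..card (VG i)})"
    and eig1: "\<And>i. i \<in> {1..r} \<Longrightarrow> lam i 1 = real (d i)"
  shows
    "let n = (\<lambda>i. card (VG i));
         N = (\<lambda>i. \<Sum>j\<in>{j \<in> {1..r}. EH i j}. n j);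
         lam1M = (\<lambda>i. s\<^sup>2 * (real (d i) + real (N i) - 1) - s * real (d i) + 1);
         F = (\<lambda>i j. if i = j then lam1M i
                     else (if EH i j then - s else 0) * sqrt (real (n i) * real (n j)))
     in spec_on (join_vertices r VG) (deformed_laplacian (join_vertices r VG) (join_edges r EH VG EG) s)
        = (\<Sum>i\<in>{1..r}. image_mset (\<lambda>k. s\<^sup>2 * (real (d i) + real (N i) - 1) - s * lam i k + 1)
                                    (mset_set {2..n i}))
          + spec_on {1..r} F"
proof -
  define I where "I = {1..r}"
  have I: "finite I" unfolding I_def by simp
  define n where "n i = card (VG i)" for i
  define Nn where "Nn i = (\<Sum>j\<in>{j \<in> {1..r}. EH i j}. n j)" for i
  define cc where "cc i = s\<^sup>2 * (real (d i) + real (Nn i) - 1) + 1" for i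
  define V where "V = join_vertices r VG"
  define E where "E = join_edges r EH VG EG"
  define MG where "MG = deformed_laplacian V E s"
  have finG: "finite (VG i)" if "i \<in> I" for i using Gi[of i] that unfolding I_def simple_graph_def by auto
  have EHirr: "\<not> EH i i" if "i \<in> I" for i using H(1) that unfolding I_def simple_graph_def by auto
  have EGirr: "\<not> EG i a a" if "i \<in> I" "a \<in> VG i" for i a
    using Gi[of i] that unfolding I_def simple_graph_def by auto
  have EGsym: "EG i a b \<longleftrightarrow> EG i b a" if "i \<in> I" "a \<in> VG i" "b \<in> VG i" for i a b
    using Gi[of i] that unfolding I_def simple_graph_def by auto
  have djI: "VG i \<inter> VG j = {}" if "i \<in> I" "j \<in> I" "i \<noteq> j" for i j
    using disj that unfolding I_def by auto
  have memb: "u \<in> VG k \<longleftrightarrow> k = i" if "k \<in> I" "i \<in> I" "u \<in> VG i" for k i u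
    using djI[of k i] that by auto
  have VV: "V = (\<Union>i\<in>I. VG i)" unfolding V_def join_vertices_def I_def by simp
  have finV: "finite V" unfolding VV using I finG by auto
  have Eiff: "E u w \<longleftrightarrow> (if i = j then EG i u w else EH i j)"
    if "i \<in> I" "j \<in> I" "u \<in> VG i" "w \<in> VG j" for i j u w
  proof -
    have "E u w \<longleftrightarrow> (\<exists>k\<in>I. u \<in> VG k \<and> w \<in> VG k \<and> EG k u w) \<or> (\<exists>k\<in>I. \<exists>l\<in>I. EH k l \<and> u \<in> VG k \<and> w \<in> VG l)"
      unfolding E_def join_edges_def I_def by simp
    also have "\<dots> \<longleftrightarrow> (i = j \<and> EG i u w) \<or> EH i j"
    proof -
      have m1: "\<And>k. k \<in> I \<Longrightarrow> u \<in> VG k \<longleftrightarrow> k = i" using memb that by blast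
      have m2: "\<And>k. k \<in> I \<Longrightarrow> w \<in> VG k \<longleftrightarrow> k = j" using memb that by blast
      show ?thesis using that(1,2) by (simp add: m1 m2 cong: rev_conj_cong) blast
    qed
    finally show ?thesis using EHirr[of i] that by auto
  qed
  have deg: "degree V E u = d i + Nn i" if i: "i \<in> I" and u: "u \<in> VG i" for i u
  proof -
    have "{w \<in> V. E u w} = {w \<in> VG i. EG i u w} \<union> (\<Union>j\<in>{j \<in> I. EH i j}. VG j)"
    proof (intro equalityI subsetI)
      fix w assume "w \<in> {w \<in> V. E u w}"
      then obtain j where j: "j \<in> I" "w \<in> VG j" "E u w" unfolding VV by auto
      thus "w \<in> {w \<in> VG i. EG i u w} \<union> (\<Union>j\<in>{j \<in> I. EH i j}. VG j)"
        using Eiff[OF i j(1) u j(2)] by (auto split: if_splits)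
    next
      fix w assume w: "w \<in> {w \<in> VG i. EG i u w} \<union> (\<Union>j\<in>{j \<in> I. EH i j}. VG j)"
      then obtain j where j: "j \<in> I" "w \<in> VG j" "if i = j then EG i u w else EH i j"
      proof (cases "w \<in> VG i \<and> EG i u w")
        case True thus ?thesis using that i by auto
      next
        case False
        then obtain j where "j \<in> I" "EH i j" "w \<in> VG j" using w by auto
        moreover have "i \<noteq> j" using EHirr[OF i] calculation by auto
        ultimately show ?thesis using that by auto
      qed
      thus "w \<in> {w \<in> V. E u w}" using Eiff[OF i j(1) u j(2)] unfolding VV by auto
    qed
    moreover have "{w \<in> VG i. EG i u w} \<inter> (\<Union>j\<in>{j \<in> I. EH i j}. VG j) = {}"
    proof -
      have "VG i \<inter> VG j = {}" if "j \<in> I" "EH i j" for j using djI[OF i that(1)] EHirr[OF i] that by auto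
      thus ?thesis by blast
    qed
    moreover have "card (\<Union>j\<in>{j \<in> I. EH i j}. VG j) = (\<Sum>j\<in>{j \<in> I. EH i j}. card (VG j))"
      using I finG djI by (intro card_UN_disjoint) auto
    moreover have "card {w \<in> VG i. EG i u w} = d i"
      using reg[of i] i u unfolding regular_def degree_def I_def by auto
    moreover have "card ({w \<in> VG i. EG i u w} \<union> (\<Union>j\<in>{j \<in> I. EH i j}. VG j))
        = card {w \<in> VG i. EG i u w} + card (\<Union>j\<in>{j \<in> I. EH i j}. VG j)"
      by (rule card_Un_disjoint) (use finG[OF i] I finG calculation(2) in auto)
    ultimately have "card {w \<in> V. E u w} = d i + (\<Sum>j\<in>{j \<in> I. EH i j}. card (VG j))"
      by simp
    thus ?thesis unfolding degree_def Nn_def n_def I_def by simp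
  qed
  have MGe: "MG a b = (if a = b then cc i else 0) - s * (if (if j = i then EG i a b else EH j i) then 1 else 0)"
    if i: "i \<in> I" and j: "j \<in> I" and a: "a \<in> VG j" and b: "b \<in> VG i" for i j a b
  proof -
    have "a = b \<Longrightarrow> j = i" using memb a b i j by blast
    thus ?thesis unfolding MG_def deformed_laplacian_def adj_mat_def cc_def
      using Eiff[OF j i a b] deg[OF j a] EGirr[OF i b] by (cases "a = b") (simp_all add: algebra_simps)
  qed
  define v where "v i = (SOME x. x \<in> VG i)" for i
  have vB: "v i \<in> VG i" if "i \<in> I" for i
    unfolding v_def using nonempty[of i] that unfolding I_def by (simp add: some_in_eq)
  define K where "K j i = (if j = i then cc i - s * real (d i) else (if EH j i then -s else 0) * real (n i))" for j i
  have cardEG: "card {b \<in> VG i. EG i a b} = d i" if "i \<in> I" "a \<in> VG i" for i a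
    using reg[of i] that unfolding regular_def degree_def I_def by auto
  have C1: "(\<Sum>b\<in>VG i. MG a b) = K j i" if i: "i \<in> I" and j: "j \<in> I" and a: "a \<in> VG j" for i j a
  proof -
    have "(\<Sum>b\<in>VG i. MG a b) = (\<Sum>b\<in>VG i. (if a = b then cc i else 0)) - s * (\<Sum>b\<in>VG i. (if (if j = i then EG i a b else EH j i) then 1 else 0))"
      using MGe[OF i j a] by (simp add: sum_subtractf sum_distrib_left)
    also have "\<dots> = K j i"
    proof (cases "j = i")
      case True
      thus ?thesis using a finG[OF i] sum_ind_card[OF finG[OF i], of "EG i a"] cardEG[OF i] by (simp add: K_def)
    next
      case False
      hence "a \<notin> VG i" using memb[OF i j a] by blast
      hence "(\<Sum>b\<in>VG i. (if a = b then cc i else 0)) = 0" by (intro sum.neutral) auto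
      thus ?thesis using False by (simp add: K_def n_def)
    qed
    finally show ?thesis .
  qed
  have C2: "MG a u = MG a (v i)" if i: "i \<in> I" and j: "j \<in> I" and ij: "i \<noteq> j" and a: "a \<in> VG j" and u: "u \<in> VG i" for i j a u
  proof -
    have "a \<noteq> u" "a \<noteq> v i" using memb[OF j i u] memb[OF j i vB[OF i]] a ij by auto
    thus ?thesis using MGe[OF i j a u] MGe[OF i j a vB[OF i]] ij by simp
  qed
  have C3v: "(\<Sum>w\<in>VG i. MG w u) = cc i - s * real (d i)" if i: "i \<in> I" and u: "u \<in> VG i" for i u
  proof -
    have "(\<Sum>w\<in>VG i. MG w u) = (\<Sum>w\<in>VG i. (if w = u then cc i else 0)) - s * (\<Sum>w\<in>VG i. (if EG i w u then 1 else 0))"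
      using MGe[OF i i _ u] by (simp add: sum_subtractf sum_distrib_left)
    moreover have "{w \<in> VG i. EG i w u} = {w \<in> VG i. EG i u w}" using EGsym[OF i _ u] by auto
    ultimately show ?thesis using u finG[OF i] sum_ind_card[OF finG[OF i], of "\<lambda>w. EG i w u"] cardEG[OF i u] by simp
  qed
  have C3: "(\<Sum>w\<in>VG i. MG w u) = (\<Sum>w\<in>VG i. MG w (v i))" if i: "i \<in> I" and u: "u \<in> VG i" for i u
    using C3v[OF i u] C3v[OF i vB[OF i]] by simp
  define R where "R i = cp (VG i - {v i}) (\<lambda>w u. MG w u - MG w (v i))" for i
  have glob: "cp V MG = cp I K * (\<Prod>i\<in>I. R i)"
    unfolding VV R_def
    by (rule collapse[OF I finG vB djI C1 C2 C3])
  have loc: "proots (R i) = image_mset (\<lambda>k. s\<^sup>2 * (real (d i) + real (Nn i) - 1) - s * lam i k + 1) (mset_set {2..n i})"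
    if i: "i \<in> I" for i
  proof -
    have I1: "finite {i}" by simp
    have "cp (\<Union>i\<in>{i}. VG i) MG = cp {i} K * (\<Prod>i\<in>{i}. cp (VG i - {v i}) (\<lambda>w u. MG w u - MG w (v i)))"
      apply (rule collapse[OF I1])
      subgoal using finG i by simp
      subgoal using vB i by simp
      subgoal by simp
      subgoal using C1 i by simp
      subgoal by simp
      subgoal using C3 i by simp
      done
    hence c1: "cp (VG i) MG = [:- (cc i - s * real (d i)), 1:] * R i"
      by (simp add: cp_single K_def R_def)
    have "cp (VG i) MG = cp (VG i) (\<lambda>a b. (if a = b then cc i else 0) - s * adj_mat (VG i) (EG i) a b)"
      by (rule cp_cong[OF finG[OF i]]) (simp add: MGe[OF i i] adj_mat_def)
    hence "proots (cp (VG i) MG) = image_mset (\<lambda>x. cc i - s * x) (image_mset (lam i) (mset_set {1..n i}))"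
      using transform_spec[OF finG[OF i], of "adj_mat (VG i) (EG i)" "image_mset (lam i) (mset_set {1..n i})" "cc i" s]
        eig[of i] i unfolding spec_on_def cp_def[symmetric] I_def n_def by simp
    also have "mset_set {1..n i} = add_mset 1 (mset_set {2..n i})"
    proof -
      have "n i \<ge> 1" using vB[OF i] finG[OF i] unfolding n_def
        using card_gt_0_iff[of "VG i"] by auto
      hence "{1..n i} = insert 1 {2..n i}" by auto
      thus ?thesis by simp
    qed
    finally have "proots (cp (VG i) MG) = add_mset (cc i - s * real (d i)) (image_mset (\<lambda>k. cc i - s * lam i k) (mset_set {2..n i}))"
      using eig1[of i] i unfolding I_def by (simp add: image_mset.compositionality o_def)
    moreover have "proots (cp (VG i) MG) = add_mset (cc i - s * real (d i)) (proots (R i))"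
      unfolding c1 by (subst proots_mult) (auto simp: R_def cp_nonzero finG[OF i])
    ultimately have "proots (R i) = image_mset (\<lambda>k. cc i - s * lam i k) (mset_set {2..n i})" by simp
    also have "(\<lambda>k. cc i - s * lam i k) = (\<lambda>k. s\<^sup>2 * (real (d i) + real (Nn i) - 1) - s * lam i k + 1)"
      by (auto simp: cc_def)
    finally show ?thesis .
  qed
  define Fm where "Fm i j = (if i = j then s\<^sup>2 * (real (d i) + real (Nn i) - 1) - s * real (d i) + 1
      else (if EH i j then - s else 0) * sqrt (real (n i) * real (n j)))" for i j
  have npos: "real (n i) > 0" if "i \<in> I" for i
    using vB[OF that] finG[OF that] card_gt_0_iff[of "VG i"] unfolding n_def by auto
  have KF: "cp I K = cp I Fm"
  proof (rule cp_sim[OF I, where P = "\<lambda>a b. idf a b * (1 / sqrt (real (n b)))"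
        and Q = "\<lambda>a b. idf a b * sqrt (real (n a))"])
    fix i j assume i: "i \<in> I" and j: "j \<in> I"
    show "mmul I (\<lambda>a b. idf a b * sqrt (real (n a))) (\<lambda>a b. idf a b * (1 / sqrt (real (n b)))) i j = idf i j"
      unfolding diag_left[OF I i] using npos[OF i] npos[OF j] by (simp add: idf_def)
    have "mmul I K (\<lambda>a b. idf a b * (1 / sqrt (real (n b)))) i j = K i j * (1 / sqrt (real (n j)))"
      by (rule diag_right[OF I j])
    also have "\<dots> = 1 / sqrt (real (n i)) * Fm i j"
    proof (cases "i = j")
      case True thus ?thesis by (simp add: K_def Fm_def cc_def algebra_simps)
    next
      case False
      have "real (n j) / sqrt (real (n j)) = sqrt (real (n i) * real (n j)) / sqrt (real (n i))"
        using npos[OF i] npos[OF j] by (simp add: real_div_sqrt real_sqrt_mult)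
      thus ?thesis using False by (auto simp: K_def Fm_def) (metis times_divide_eq_right)
    qed
    also have "\<dots> = mmul I (\<lambda>a b. idf a b * (1 / sqrt (real (n a)))) Fm i j"
      by (rule diag_left[OF I i, symmetric])
    also have "(\<lambda>a b. idf a b * (1 / sqrt (real (n a)))) = (\<lambda>a b. idf a b * (1 / sqrt (real (n b))))"
      by (auto simp: idf_def fun_eq_iff)
    finally show "mmul I K (\<lambda>a b. idf a b * (1 / sqrt (real (n b)))) i j = mmul I (\<lambda>a b. idf a b * (1 / sqrt (real (n b)))) Fm i j" .
  qed
  have nzR: "R i \<noteq> 0" if "i \<in> I" for i unfolding R_def using finG[OF that] by (simp add: cp_nonzero)
  have "spec_on V MG = proots (cp I K * (\<Prod>i\<in>I. R i))" unfolding spec_on_def cp_def[symmetric] glob ..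
  also have "\<dots> = proots (cp I K) + (\<Sum>i\<in>I. proots (R i))"
    using nzR I cp_nonzero[OF I, of K] by (simp add: proots_mult proots_prod)
  also have "(\<Sum>i\<in>I. proots (R i)) = (\<Sum>i\<in>I. image_mset (\<lambda>k. s\<^sup>2 * (real (d i) + real (Nn i) - 1) - s * lam i k + 1) (mset_set {2..n i}))"
    using loc by (intro sum.cong) auto
  finally have final: "spec_on V MG = (\<Sum>i\<in>I. image_mset (\<lambda>k. s\<^sup>2 * (real (d i) + real (Nn i) - 1) - s * lam i k + 1) (mset_set {2..n i})) + spec_on I Fm"
    using KF unfolding spec_on_def cp_def by (simp add: add.commute)
  show ?thesis using final unfolding Let_def I_def Fm_def V_def MG_def E_def n_def Nn_def by simp
qed

end
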